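(* For every filter $\Xi\in P_{III*}$, the class $\mathcal{C}_{\Xi\text{-unc}}$ is nonempty if and only if $\wedge\Xi\not\subseteq\vee\overline{\Xi}$ (i.e. $\wedge\Xi\not\preceq\vee\overline{\Xi}$).
   Context: Let $n\ge1$ and $L=\{1,\dots,n\}$. For each $i\in L$ let $\mathcal H_i$ be a Hilbert space with $1<\dim\mathcal H_i<\infty$; for $X\subseteq L$ put $\mathcal H_X=\bigotimes_{i\in X}\mathcal H_i$ and let $\mathcal D_X$ be the set of density operators (positive semidefinite, trace one) on $\mathcal H_X$. $P_I$ denotes the set of partitions of $L$ (sets of nonempty pairwise disjoint subsets of $L$ whose union is $L$), partially ordered by refinement: $\upsilon\preceq\xi$ iff every part of $\upsilon$ is contained in some part of $\xi$. For $\xi\in P_I$, $\mathcal D_{\xi\text{-unc}}=\{\varrho\in\mathcal D_L:\ \varrho=\bigotimes_{X\in\xi}\varrho_X \text{ for some } \varrho_X\in\mathcal D_X\}$. For any set $S\subseteq P_I$ of partitions, $\mathcal D_{S\text{-unc}}=\bigcup_{\xi\in S}\mathcal D_{\xi\text{-unc}}$ (so $\mathcal D_{\emptyset\text{-unc}}=\emptyset$). $P_{II}$ is the set of nonempty down-sets (ideals) of $(P_I,\preceq)$, partially ordered by inclusion ($\boldsymbol\upsilon\preceq\boldsymbol\xi$ iff $\boldsymbol\upsilon\subseteq\boldsymbol\xi$); meets and joins in $P_{II}$ are intersections and unions. $P_{II*}\subseteq P_{II}$ is an arbitrary fixed nonempty subset with the induced order, and $P_{III*}$ is the set of nonempty up-sets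 of $P_{II*}$ (nonempty $\Xi\subseteq P_{II*}$ such that $\boldsymbol\xi\in\Xi$, $\boldsymbol\upsilon\in P_{II*}$, $\boldsymbol\xi\subseteq\boldsymbol\upsilon$ imply $\boldsymbol\upsilon\in\Xi$). For $\Xi\in P_{III*}$: $\overline{\Xi}=P_{II*}\setminus\Xi$, $\wedge\Xi=\bigcap_{\boldsymbol\xi\in\Xi}\boldsymbol\xi$, $\vee\overline\Xi=\bigcup_{\boldsymbol\xi'\in\overline\Xi}\boldsymbol\xi'$ (which is $\emptyset$ if $\overline\Xi=\emptyset$); these are sets of partitions, compared by inclusion. The class of strictly $\Xi$-uncorrelated states is $\mathcal C_{\Xi\text{-unc}}=\bigcap_{\boldsymbol\xi'\in\overline\Xi}(\mathcal D_L\setminus\mathcal D_{\boldsymbol\xi'\text{-unc}})\cap\bigcap_{\boldsymbol\xi\in\Xi}\mathcal D_{\boldsymbol\xi\text{-unc}}$. *)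

theory Defs
  imports Complex_Main "HOL-Library.Complex_Order"
begin

text \<open>Subsystem i (i in L = {1..n}) is modelled by the Hilbert space C^(d i) with its
standard basis. A basis vector of H_X is a multi-index f :: nat => nat with f i < d i
for i in X and f i = 0 outside X. Operators on H_X are matrices indexed by such
multi-indices; we make them zero outside the basis so that they are uniquely determined.\<close>

definition basis_idx :: "(nat \<Rightarrow> nat) \<Rightarrow> nat set \<Rightarrow> (nat \<Rightarrow> nat) set" where
  "basis_idx d X = {f. (\<forall>i\<in>X. f i < d i) \<and> (\<forall>i. i \<notin> X \<longrightarrow> f i = 0)}"

definition restr :: "(nat \<Rightarrow> nat) \<Rightarrow> nat set \<Rightarrow> (nat \<Rightarrow> nat)" where
  "restr f X = (\<lambda>i. if i \<in> X then f i else 0)"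

type_synonym op = "(nat \<Rightarrow> nat) \<Rightarrow> (nat \<Rightarrow> nat) \<Rightarrow> complex"

definition dens :: "(nat \<Rightarrow> nat) \<Rightarrow> nat set \<Rightarrow> op set" where
  "dens d X = {\<rho>.
     (\<forall>f g. (f \<notin> basis_idx d X \<or> g \<notin> basis_idx d X) \<longrightarrow> \<rho> f g = 0) \<and>
     (\<forall>v :: (nat \<Rightarrow> nat) \<Rightarrow> complex.
        0 \<le> (\<Sum>f\<in>basis_idx d X. \<Sum>g\<in>basis_idx d X. cnj (v f) * \<rho> f g * v g)) \<and>
     (\<Sum>f\<in>basis_idx d X. \<rho> f f) = 1}"

definition is_partition :: "nat set \<Rightarrow> nat set set \<Rightarrow> bool" where
  "is_partition L \<xi> \<longleftrightarrow> (\<forall>X\<in>\<xi>. X \<noteq> {}) \<and>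
     (\<forall>X\<in>\<xi>. \<forall>Y\<in>\<xi>. X \<noteq> Y \<longrightarrow> X \<inter> Y = {}) \<and> \<Union>\<xi> = L"

definition PI :: "nat \<Rightarrow> nat set set set" where
  "PI n = {\<xi>. is_partition {1..n} \<xi>}"

definition refines :: "nat set set \<Rightarrow> nat set set \<Rightarrow> bool" where
  "refines \<upsilon> \<xi> \<longleftrightarrow> (\<forall>X\<in>\<upsilon>. \<exists>Y\<in>\<xi>. X \<subseteq> Y)"

definition PII :: "nat \<Rightarrow> nat set set set set" where
  "PII n = {S. S \<noteq> {} \<and> S \<subseteq> PI n \<and>
     (\<forall>\<xi>\<in>S. \<forall>\<upsilon>\<in>PI n. refines \<upsilon> \<xi> \<longrightarrow> \<upsilon> \<in> S)}"

text \<open>P_III*: nonempty up-sets of P_II* (ordered by inclusion).\<close>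
definition PIII :: "nat set set set set \<Rightarrow> nat set set set set set" where
  "PIII Pstar = {\<Xi>. \<Xi> \<noteq> {} \<and> \<Xi> \<subseteq> Pstar \<and>
     (\<forall>x\<in>\<Xi>. \<forall>y\<in>Pstar. x \<subseteq> y \<longrightarrow> y \<in> \<Xi>)}"

definition unc :: "nat \<Rightarrow> (nat \<Rightarrow> nat) \<Rightarrow> nat set set \<Rightarrow> op set" where
  "unc n d \<xi> = {\<rho> \<in> dens d {1..n}. \<exists>\<rho>s :: nat set \<Rightarrow> op.
     (\<forall>X\<in>\<xi>. \<rho>s X \<in> dens d X) \<and>
     \<rho> = (\<lambda>f g. if f \<in> basis_idx d {1..n} \<and> g \<in> basis_idx d {1..n}
                 then (\<Prod>X\<in>\<xi>. \<rho>s X (restr f X) (restr g X)) else 0)}"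

definition unc_set :: "nat \<Rightarrow> (nat \<Rightarrow> nat) \<Rightarrow> nat set set set \<Rightarrow> op set" where
  "unc_set n d S = (\<Union>\<xi>\<in>S. unc n d \<xi>)"

definition C_unc :: "nat \<Rightarrow> (nat \<Rightarrow> nat) \<Rightarrow> nat set set set set \<Rightarrow> nat set set set set \<Rightarrow> op set" where
  "C_unc n d Pstar \<Xi> =
     (\<Inter>\<xi>'\<in>Pstar - \<Xi>. dens d {1..n} - unc_set n d \<xi>') \<inter> (\<Inter>\<xi>\<in>\<Xi>. unc_set n d \<xi>)"

end

theory Submission
  imports Defs "HOL-Library.FuncSet"
begin

definition mrg :: "(nat \<Rightarrow> nat) \<Rightarrow> (nat \<Rightarrow> nat) \<Rightarrow> (nat \<Rightarrow> nat)" where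
  "mrg f h = (\<lambda>i. f i + h i)"

lemma basis_zero: "f \<in> basis_idx d A \<Longrightarrow> i \<notin> A \<Longrightarrow> f i = 0"
  by (simp add: basis_idx_def)

lemma finite_basis: assumes "finite X" shows "finite (basis_idx d X)"
proof -
  have "basis_idx d X \<subseteq> (\<lambda>f. restr f X) ` (PiE X (\<lambda>i. {..<d i}))"
  proof
    fix g assume g: "g \<in> basis_idx d X"
    have "g = restr (restrict g X) X" using g by (auto simp: restr_def basis_idx_def fun_eq_iff)
    moreover have "restrict g X \<in> PiE X (\<lambda>i. {..<d i})" using g by (auto simp: basis_idx_def)
    ultimately show "g \<in> (\<lambda>f. restr f X) ` (PiE X (\<lambda>i. {..<d i}))" by blast
  qed
  moreover have "finite (PiE X (\<lambda>i. {..<d i}))" using assms by (simp add: finite_PiE)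
  ultimately show ?thesis using finite_subset by blast
qed

lemma basis_empty: "basis_idx d {} = {(\<lambda>_. 0)}"
  by (auto simp: basis_idx_def)

lemma sum_split:
  assumes "finite A" "finite C" "A \<inter> C = {}"
  shows "(\<Sum>k\<in>basis_idx d (A \<union> C). F k) = (\<Sum>f\<in>basis_idx d A. \<Sum>h\<in>basis_idx d C. F (mrg f h))"
proof -
  have "(\<Sum>f\<in>basis_idx d A. \<Sum>h\<in>basis_idx d C. F (mrg f h)) = (\<Sum>p\<in>basis_idx d A \<times> basis_idx d C. F (mrg (fst p) (snd p)))"
    by (simp add: sum.cartesian_product split_beta)
  also have "\<dots> = (\<Sum>k\<in>basis_idx d (A \<union> C). F k)"
  proof (rule sum.reindex_bij_witness[where j = "\<lambda>p. mrg (fst p) (snd p)" and i = "\<lambda>k. (restr k A, restr k C)"])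
    fix p assume p: "p \<in> basis_idx d A \<times> basis_idx d C"
    then show "(restr (mrg (fst p) (snd p)) A, restr (mrg (fst p) (snd p)) C) = p"
      using assms(3) by (cases p) (auto simp: restr_def mrg_def basis_idx_def fun_eq_iff)
    show "mrg (fst p) (snd p) \<in> basis_idx d (A \<union> C)"
      using p assms(3) by (cases p) (auto simp: mrg_def basis_idx_def)
  next
    fix k assume k: "k \<in> basis_idx d (A \<union> C)"
    then show "mrg (fst (restr k A, restr k C)) (snd (restr k A, restr k C)) = k"
      using assms(3) by (auto simp: restr_def mrg_def basis_idx_def fun_eq_iff)
    show "(restr k A, restr k C) \<in> basis_idx d A \<times> basis_idx d C"
      using k by (auto simp: restr_def basis_idx_def)
  qed simp
  finally show ?thesis by simp
qed

lemma prod_sum: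
  fixes F :: "'i \<Rightarrow> (nat \<Rightarrow> nat) \<Rightarrow> complex"
  assumes "finite I" "\<forall>i\<in>I. finite (Bk i)" "\<forall>i\<in>I. \<forall>j\<in>I. i \<noteq> j \<longrightarrow> Bk i \<inter> Bk j = {}"
  shows "(\<Sum>k\<in>basis_idx d (\<Union>i\<in>I. Bk i). \<Prod>i\<in>I. F i (restr k (Bk i)))
       = (\<Prod>i\<in>I. \<Sum>f\<in>basis_idx d (Bk i). F i f)"
  using assms
proof (induction I rule: finite_induct)
  case empty
  then show ?case by (simp add: basis_empty)
next
  case (insert j I)
  let ?U = "\<Union>i\<in>I. Bk i"
  have disj: "Bk j \<inter> ?U = {}"
  proof -
    have "\<forall>i\<in>I. Bk j \<inter> Bk i = {}" using insert.prems(2) insert.hyps(2) by (metis insertCI)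
    then show ?thesis by blast
  qed
  have fin: "finite ?U" using insert by auto
  have "(\<Sum>k\<in>basis_idx d (\<Union>i\<in>insert j I. Bk i). \<Prod>i\<in>insert j I. F i (restr k (Bk i)))
     = (\<Sum>f\<in>basis_idx d (Bk j). \<Sum>h\<in>basis_idx d ?U. \<Prod>i\<in>insert j I. F i (restr (mrg f h) (Bk i)))"
    using sum_split[OF _ fin disj] insert by simp
  also have "\<dots> = (\<Sum>f\<in>basis_idx d (Bk j). \<Sum>h\<in>basis_idx d ?U. F j f * (\<Prod>i\<in>I. F i (restr h (Bk i))))"
  proof (intro sum.cong refl)
    fix f h assume f: "f \<in> basis_idx d (Bk j)" and h: "h \<in> basis_idx d ?U"
    have h0: "\<forall>i\<in>Bk j. h i = 0"
    proof
      fix i assume "i \<in> Bk j"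
      then have "i \<notin> ?U" using disj by blast
      then show "h i = 0" using h by (simp add: basis_idx_def)
    qed
    have 1: "restr (mrg f h) (Bk j) = f" using f h0
      by (auto simp: restr_def mrg_def basis_idx_def fun_eq_iff)
    have 2: "restr (mrg f h) (Bk i) = restr h (Bk i)" if "i \<in> I" for i
    proof -
      have "Bk i \<inter> Bk j = {}" using insert.prems(2) insert.hyps(2) that by (metis insertCI)
      then show ?thesis using f by (auto simp: restr_def mrg_def basis_idx_def fun_eq_iff)
    qed
    show "(\<Prod>i\<in>insert j I. F i (restr (mrg f h) (Bk i))) = F j f * (\<Prod>i\<in>I. F i (restr h (Bk i)))"
      using insert 1 2 by simp
  qed
  also have "\<dots> = (\<Sum>f\<in>basis_idx d (Bk j). F j f) * (\<Sum>h\<in>basis_idx d ?U. \<Prod>i\<in>I. F i (restr h (Bk i)))"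
    by (simp add: sum_product)
  also have "\<dots> = (\<Prod>i\<in>insert j I. \<Sum>f\<in>basis_idx d (Bk i). F i f)"
    using insert by simp
  finally show ?case .
qed

lemma marg_prod:
  fixes R :: "nat set \<Rightarrow> op"
  assumes "finite \<alpha>" "\<forall>X\<in>\<alpha>. finite X" "\<forall>X\<in>\<alpha>. \<forall>Y\<in>\<alpha>. X \<noteq> Y \<longrightarrow> X \<inter> Y = {}"
    "\<forall>X\<in>\<alpha>. (\<Sum>f\<in>basis_idx d X. R X f f) = 1"
    "X0 \<in> \<alpha>" "Z \<subseteq> X0" "f \<in> basis_idx d Z" "g \<in> basis_idx d Z"
  shows "(\<Sum>h\<in>basis_idx d (\<Union>\<alpha> - Z). \<Prod>X\<in>\<alpha>. R X (restr (mrg f h) X) (restr (mrg g h) X))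
       = (\<Sum>h\<in>basis_idx d (X0 - Z). R X0 (mrg f h) (mrg g h))"
proof -
  have U: "\<Union>\<alpha> - Z = (X0 - Z) \<union> (\<Union>\<alpha> - X0)" using assms(5,6) by blast
  have fin1: "finite (X0 - Z)" using assms by auto
  have fin2: "finite (\<Union>\<alpha> - X0)" using assms by auto
  have dj: "(X0 - Z) \<inter> (\<Union>\<alpha> - X0) = {}" by blast
  have U2: "\<Union>(\<alpha> - {X0}) = \<Union>\<alpha> - X0" using assms(3,5) by blast
  have tr: "(\<Sum>h2\<in>basis_idx d (\<Union>\<alpha> - X0). \<Prod>X\<in>\<alpha> - {X0}. R X (restr h2 X) (restr h2 X)) = 1"
  proof -
    have "(\<Sum>h2\<in>basis_idx d (\<Union>X\<in>\<alpha> - {X0}. X). \<Prod>X\<in>\<alpha> - {X0}. (\<lambda>X h. R X h h) X (restr h2 X))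
        = (\<Prod>X\<in>\<alpha> - {X0}. \<Sum>f\<in>basis_idx d X. (\<lambda>X h. R X h h) X f)"
      by (rule prod_sum) (use assms in auto)
    also have "\<dots> = 1" using assms(4) by simp
    finally show ?thesis using U2 by simp
  qed
  have "(\<Sum>h\<in>basis_idx d (\<Union>\<alpha> - Z). \<Prod>X\<in>\<alpha>. R X (restr (mrg f h) X) (restr (mrg g h) X))
     = (\<Sum>h1\<in>basis_idx d (X0 - Z). \<Sum>h2\<in>basis_idx d (\<Union>\<alpha> - X0).
          \<Prod>X\<in>\<alpha>. R X (restr (mrg f (mrg h1 h2)) X) (restr (mrg g (mrg h1 h2)) X))"
    unfolding U by (rule sum_split[OF fin1 fin2 dj])
  also have "\<dots> = (\<Sum>h1\<in>basis_idx d (X0 - Z). \<Sum>h2\<in>basis_idx d (\<Union>\<alpha> - X0).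
          R X0 (mrg f h1) (mrg g h1) * (\<Prod>X\<in>\<alpha> - {X0}. R X (restr h2 X) (restr h2 X)))"
  proof (intro sum.cong refl)
    fix h1 h2 assume h1: "h1 \<in> basis_idx d (X0 - Z)" and h2: "h2 \<in> basis_idx d (\<Union>\<alpha> - X0)"
    have a: "restr (mrg u (mrg h1 h2)) X0 = mrg u h1" if "u \<in> basis_idx d Z" for u
      using that h1 h2 assms(6) by (auto simp: restr_def mrg_def basis_idx_def fun_eq_iff)
    have b: "restr (mrg u (mrg h1 h2)) X = restr h2 X" if "u \<in> basis_idx d Z" "X \<in> \<alpha> - {X0}" for u X
    proof -
      have "X \<inter> X0 = {}" using assms(3,5) that(2) by blast
      then show ?thesis using that(1) h1 assms(6) by (auto simp: restr_def mrg_def basis_idx_def fun_eq_iff)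
    qed
    have "(\<Prod>X\<in>\<alpha>. R X (restr (mrg f (mrg h1 h2)) X) (restr (mrg g (mrg h1 h2)) X))
      = R X0 (restr (mrg f (mrg h1 h2)) X0) (restr (mrg g (mrg h1 h2)) X0) *
        (\<Prod>X\<in>\<alpha> - {X0}. R X (restr (mrg f (mrg h1 h2)) X) (restr (mrg g (mrg h1 h2)) X))"
      using assms(1,5) by (rule prod.remove)
    also have "\<dots> = R X0 (mrg f h1) (mrg g h1) * (\<Prod>X\<in>\<alpha> - {X0}. R X (restr h2 X) (restr h2 X))"
      using a b assms(7,8) by simp
    finally show "(\<Prod>X\<in>\<alpha>. R X (restr (mrg f (mrg h1 h2)) X) (restr (mrg g (mrg h1 h2)) X))
      = R X0 (mrg f h1) (mrg g h1) * (\<Prod>X\<in>\<alpha> - {X0}. R X (restr h2 X) (restr h2 X))" .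
  qed
  also have "\<dots> = (\<Sum>h1\<in>basis_idx d (X0 - Z). R X0 (mrg f h1) (mrg g h1))"
    by (simp add: sum_distrib_left[symmetric] tr)
  finally show ?thesis .
qed

definition marg :: "(nat \<Rightarrow> nat) \<Rightarrow> nat set \<Rightarrow> op \<Rightarrow> nat set \<Rightarrow> op" where
  "marg d L \<rho> Z = (\<lambda>f g. if f \<in> basis_idx d Z \<and> g \<in> basis_idx d Z
      then (\<Sum>h\<in>basis_idx d (L - Z). \<rho> (mrg f h) (mrg g h)) else 0)"

lemma mrg_restr:
  assumes "f \<in> basis_idx d Z" "h \<in> basis_idx d (L - Z)"
  shows "restr (mrg f h) (L - Z) = h" "restr (mrg f h) Z = f"
  using assms by (auto simp: restr_def mrg_def basis_idx_def fun_eq_iff)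

lemma marg_dens:
  assumes "finite L" "Z \<subseteq> L" "\<rho> \<in> dens d L"
  shows "marg d L \<rho> Z \<in> dens d Z"
proof -
  have fZ: "finite Z" using assms finite_subset by blast
  have fLZ: "finite (L - Z)" using assms by auto
  have dj: "Z \<inter> (L - Z) = {}" by blast
  have LL: "L = Z \<union> (L - Z)" using assms by blast
  have ss: "(\<Sum>k\<in>basis_idx d L. F k) = (\<Sum>f\<in>basis_idx d Z. \<Sum>h\<in>basis_idx d (L - Z). F (mrg f h))" for F :: "_ \<Rightarrow> complex"
    using sum_split[OF fZ fLZ dj, where d=d and F=F] LL by simp
  have tr: "(\<Sum>f\<in>basis_idx d Z. marg d L \<rho> Z f f) = 1"
  proof -
    have "(\<Sum>f\<in>basis_idx d Z. marg d L \<rho> Z f f) = (\<Sum>f\<in>basis_idx d Z. \<Sum>h\<in>basis_idx d (L - Z). \<rho> (mrg f h) (mrg f h))"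
      by (simp add: marg_def)
    also have "\<dots> = (\<Sum>k\<in>basis_idx d (Z \<union> (L - Z)). \<rho> k k)"
      by (rule sum_split[OF fZ fLZ dj, symmetric])
    also have "\<dots> = 1" using assms(3) LL[symmetric] by (simp add: dens_def)
    finally show ?thesis .
  qed
  have pos: "0 \<le> (\<Sum>f\<in>basis_idx d Z. \<Sum>g\<in>basis_idx d Z. cnj (v f) * marg d L \<rho> Z f g * v g)" for v
  proof -
    have "(\<Sum>f\<in>basis_idx d Z. \<Sum>g\<in>basis_idx d Z. cnj (v f) * marg d L \<rho> Z f g * v g)
       = (\<Sum>f\<in>basis_idx d Z. \<Sum>g\<in>basis_idx d Z. \<Sum>h\<in>basis_idx d (L - Z). cnj (v f) * \<rho> (mrg f h) (mrg g h) * v g)"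
      by (simp add: marg_def sum_distrib_left sum_distrib_right)
    also have "\<dots> = (\<Sum>h\<in>basis_idx d (L - Z). \<Sum>f\<in>basis_idx d Z. \<Sum>g\<in>basis_idx d Z. cnj (v f) * \<rho> (mrg f h) (mrg g h) * v g)"
      by (simp add: sum.swap[of _ "basis_idx d (L - Z)"])
    also have "0 \<le> \<dots>"
    proof (rule sum_nonneg)
      fix h assume h: "h \<in> basis_idx d (L - Z)"
      define w where "w k = (if restr k (L - Z) = h then v (restr k Z) else 0)" for k
      have wm: "w (mrg f h') = (if h' = h then v f else 0)" if "f \<in> basis_idx d Z" "h' \<in> basis_idx d (L - Z)" for f h'
        using mrg_restr[OF that] by (auto simp: w_def)
      have "(\<Sum>k\<in>basis_idx d L. \<Sum>l\<in>basis_idx d L. cnj (w k) * \<rho> k l * w l)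
        = (\<Sum>f\<in>basis_idx d Z. \<Sum>h'\<in>basis_idx d (L - Z). \<Sum>g\<in>basis_idx d Z. \<Sum>h''\<in>basis_idx d (L - Z).
             cnj (w (mrg f h')) * \<rho> (mrg f h') (mrg g h'') * w (mrg g h''))"
        by (simp only: ss)
      also have "\<dots> = (\<Sum>f\<in>basis_idx d Z. \<Sum>h'\<in>basis_idx d (L - Z). \<Sum>g\<in>basis_idx d Z. \<Sum>h''\<in>basis_idx d (L - Z).
             (if h' = h then (if h'' = h then cnj (v f) * \<rho> (mrg f h) (mrg g h) * v g else 0) else 0))"
        by (intro sum.cong refl) (simp add: wm)
      also have "\<dots> = (\<Sum>f\<in>basis_idx d Z. \<Sum>g\<in>basis_idx d Z. cnj (v f) * \<rho> (mrg f h) (mrg g h) * v g)"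
        using h finite_basis[OF fLZ]
      proof -
        have fb: "finite (basis_idx d (L - Z))" using finite_basis[OF fLZ] .
        have "(\<Sum>g\<in>basis_idx d Z. \<Sum>h''\<in>basis_idx d (L - Z).
             (if h' = h then (if h'' = h then cnj (v f) * \<rho> (mrg f h) (mrg g h) * v g else 0) else 0))
           = (if h' = h then (\<Sum>g\<in>basis_idx d Z. cnj (v f) * \<rho> (mrg f h) (mrg g h) * v g) else 0)" for f h'
          by (cases "h' = h") (simp_all add: sum.delta[OF fb] h)
        then show ?thesis by (simp add: sum.delta[OF fb] h)
      qed
      finally have eq: "(\<Sum>f\<in>basis_idx d Z. \<Sum>g\<in>basis_idx d Z. cnj (v f) * \<rho> (mrg f h) (mrg g h) * v g)
           = (\<Sum>k\<in>basis_idx d L. \<Sum>l\<in>basis_idx d L. cnj (w k) * \<rho> k l * w l)" by simp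
      show "0 \<le> (\<Sum>f\<in>basis_idx d Z. \<Sum>g\<in>basis_idx d Z. cnj (v f) * \<rho> (mrg f h) (mrg g h) * v g)"
        unfolding eq using assms(3) by (simp add: dens_def)
    qed
    finally show ?thesis .
  qed
  show ?thesis unfolding dens_def using tr pos by (auto simp: marg_def)
qed

lemma mrg_in:
  assumes "f \<in> basis_idx d Z" "h \<in> basis_idx d C" "Z \<inter> C = {}"
  shows "mrg f h \<in> basis_idx d (Z \<union> C)"
  using assms by (auto simp: mrg_def basis_idx_def)

lemma mrg_in_L:
  assumes "f \<in> basis_idx d Z" "h \<in> basis_idx d (L - Z)" "Z \<subseteq> L"
  shows "mrg f h \<in> basis_idx d L"
proof -
  have "mrg f h \<in> basis_idx d (Z \<union> (L - Z))" by (rule mrg_in[OF assms(1,2)]) blast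
  moreover have "Z \<union> (L - Z) = L" using assms(3) by blast
  ultimately show ?thesis by simp
qed

lemma part_facts:
  assumes "finite L" "is_partition L \<gamma>"
  shows "finite \<gamma>" "\<forall>X\<in>\<gamma>. finite X" "\<forall>X\<in>\<gamma>. \<forall>Y\<in>\<gamma>. X \<noteq> Y \<longrightarrow> X \<inter> Y = {}"
    "\<Union>\<gamma> = L" "\<forall>X\<in>\<gamma>. X \<subseteq> L" "\<forall>X\<in>\<gamma>. X \<noteq> {}"
proof -
  have "\<gamma> \<subseteq> Pow L" using assms(2) by (auto simp: is_partition_def)
  then show "finite \<gamma>" using assms(1) finite_subset by blast
  show "\<forall>X\<in>\<gamma>. finite X" using assms by (metis Sup_upper finite_subset is_partition_def)
  show "\<forall>X\<in>\<gamma>. \<forall>Y\<in>\<gamma>. X \<noteq> Y \<longrightarrow> X \<inter> Y = {}" "\<Union>\<gamma> = L" "\<forall>X\<in>\<gamma>. X \<subseteq> L" "\<forall>X\<in>\<gamma>. X \<noteq> {}"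
    using assms(2) by (auto simp: is_partition_def)
qed

lemma marg_of_prod:
  assumes "finite L" "is_partition L \<gamma>" "\<forall>X\<in>\<gamma>. R X \<in> dens d X"
   "\<forall>f g. f \<in> basis_idx d L \<and> g \<in> basis_idx d L \<longrightarrow> \<rho> f g = (\<Prod>X\<in>\<gamma>. R X (restr f X) (restr g X))"
   "Y \<in> \<gamma>" "Z \<subseteq> Y" "a \<in> basis_idx d Z" "b \<in> basis_idx d Z"
  shows "marg d L \<rho> Z a b = (\<Sum>h\<in>basis_idx d (Y - Z). R Y (mrg a h) (mrg b h))"
proof -
  note pf = part_facts[OF assms(1,2)]
  have ZL: "Z \<subseteq> L" using pf(5) assms(5,6) by blast
  have "marg d L \<rho> Z a b = (\<Sum>h\<in>basis_idx d (L - Z). \<rho> (mrg a h) (mrg b h))"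
    using assms(7,8) by (simp add: marg_def)
  also have "\<dots> = (\<Sum>h\<in>basis_idx d (\<Union>\<gamma> - Z). \<Prod>X\<in>\<gamma>. R X (restr (mrg a h) X) (restr (mrg b h) X))"
    using pf(4) assms(4) mrg_in_L[OF assms(7) _ ZL] mrg_in_L[OF assms(8) _ ZL] by simp
  also have "\<dots> = (\<Sum>h\<in>basis_idx d (Y - Z). R Y (mrg a h) (mrg b h))"
    by (rule marg_prod[OF pf(1,2,3) _ assms(5,6,7,8)]) (use assms(3) in \<open>auto simp: dens_def\<close>)
  finally show ?thesis .
qed

definition meet :: "nat set set \<Rightarrow> nat set set \<Rightarrow> nat set set" where
  "meet \<alpha> \<beta> = (\<lambda>p. fst p \<inter> snd p) ` {p \<in> \<alpha> \<times> \<beta>. fst p \<inter> snd p \<noteq> {}}"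

lemma restr_in: "f \<in> basis_idx d A \<Longrightarrow> restr f Z \<in> basis_idx d (A \<inter> Z)"
  by (auto simp: restr_def basis_idx_def)

lemma restr_restr: "restr (restr f X) Y = restr f (X \<inter> Y)"
  by (auto simp: restr_def fun_eq_iff)

lemma meet_factor:
  assumes L: "finite L" and pa: "is_partition L \<alpha>" and pb: "is_partition L \<beta>"
    and Ra: "\<forall>X\<in>\<alpha>. Ra X \<in> dens d X" and Rb: "\<forall>Y\<in>\<beta>. Rb Y \<in> dens d Y"
    and hA: "\<forall>f g. f \<in> basis_idx d L \<and> g \<in> basis_idx d L \<longrightarrow> \<rho> f g = (\<Prod>X\<in>\<alpha>. Ra X (restr f X) (restr g X))"
    and hB: "\<forall>f g. f \<in> basis_idx d L \<and> g \<in> basis_idx d L \<longrightarrow> \<rho> f g = (\<Prod>X\<in>\<beta>. Rb X (restr f X) (restr g X))"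
    and rd: "\<rho> \<in> dens d L"
    and k: "k \<in> basis_idx d L" and l: "l \<in> basis_idx d L"
  shows "\<rho> k l = (\<Prod>Z\<in>meet \<alpha> \<beta>. marg d L \<rho> Z (restr k Z) (restr l Z))"
proof -
  note fa = part_facts[OF L pa] and fb = part_facts[OF L pb]
  let ?m = "marg d L \<rho>"
  have s2: "Ra X f g = ?m X f g" if "X \<in> \<alpha>" "f \<in> basis_idx d X" "g \<in> basis_idx d X" for X f g
  proof -
    have "?m X f g = (\<Sum>h\<in>basis_idx d (X - X). Ra X (mrg f h) (mrg g h))"
      by (rule marg_of_prod[OF L pa Ra hA that(1) _ that(2,3)]) simp
    also have "\<dots> = Ra X f g" by (simp add: basis_empty mrg_def)
    finally show ?thesis by simp
  qed
  have s4: "?m X f g = (\<Prod>Y\<in>\<beta>. ?m (X \<inter> Y) (restr f Y) (restr g Y))"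
    if X: "X \<in> \<alpha>" and f: "f \<in> basis_idx d X" and g: "g \<in> basis_idx d X" for X f g
  proof -
    have XL: "X \<subseteq> L" using fa(5) X by blast
    have U: "(\<Union>Y\<in>\<beta>. Y - X) = L - X" using fb(4) by blast
    have rr: "restr (mrg u h) Y = mrg (restr u Y) (restr h (Y - X))"
      if "u \<in> basis_idx d X" "h \<in> basis_idx d (L - X)" for u h Y
      using that by (auto simp: restr_def mrg_def basis_idx_def fun_eq_iff)
    have "?m X f g = (\<Sum>h\<in>basis_idx d (L - X). \<rho> (mrg f h) (mrg g h))"
      using f g by (simp add: marg_def)
    also have "\<dots> = (\<Sum>h\<in>basis_idx d (\<Union>Y\<in>\<beta>. Y - X). \<Prod>Y\<in>\<beta>.
        (\<lambda>Y h'. Rb Y (mrg (restr f Y) h') (mrg (restr g Y) h')) Y (restr h (Y - X)))"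
      unfolding U
    proof (intro sum.cong refl)
      fix h assume h: "h \<in> basis_idx d (L - X)"
      have "\<rho> (mrg f h) (mrg g h) = (\<Prod>Y\<in>\<beta>. Rb Y (restr (mrg f h) Y) (restr (mrg g h) Y))"
        using hB mrg_in_L[OF f h XL] mrg_in_L[OF g h XL] by blast
      then show "\<rho> (mrg f h) (mrg g h) = (\<Prod>Y\<in>\<beta>.
        (\<lambda>Y h'. Rb Y (mrg (restr f Y) h') (mrg (restr g Y) h')) Y (restr h (Y - X)))"
        using rr[OF f h] rr[OF g h] by simp
    qed
    also have "\<dots> = (\<Prod>Y\<in>\<beta>. \<Sum>h'\<in>basis_idx d (Y - X). Rb Y (mrg (restr f Y) h') (mrg (restr g Y) h'))"
      by (rule prod_sum[where Bk="\<lambda>Y. Y - X" and I=\<beta>]) (use fb in auto)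
    also have "\<dots> = (\<Prod>Y\<in>\<beta>. ?m (X \<inter> Y) (restr f Y) (restr g Y))"
    proof (rule prod.cong[OF refl])
      fix Y assume Y: "Y \<in> \<beta>"
      have a: "restr f Y \<in> basis_idx d (X \<inter> Y)" using restr_in[OF f] .
      have b: "restr g Y \<in> basis_idx d (X \<inter> Y)" using restr_in[OF g] .
      have "?m (X \<inter> Y) (restr f Y) (restr g Y) = (\<Sum>h\<in>basis_idx d (Y - X \<inter> Y). Rb Y (mrg (restr f Y) h) (mrg (restr g Y) h))"
        by (rule marg_of_prod[OF L pb Rb hB Y _ a b]) blast
      moreover have "Y - X \<inter> Y = Y - X" by blast
      ultimately show "(\<Sum>h'\<in>basis_idx d (Y - X). Rb Y (mrg (restr f Y) h') (mrg (restr g Y) h')) = ?m (X \<inter> Y) (restr f Y) (restr g Y)"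
        by simp
    qed
    finally show ?thesis .
  qed
  have s5: "?m {} (\<lambda>_. 0) (\<lambda>_. 0) = 1"
    using rd by (simp add: marg_def basis_empty mrg_def dens_def)
  define T where "T Z = ?m Z (restr k Z) (restr l Z)" for Z
  have T0: "T {} = 1" using s5 by (simp add: T_def restr_def)
  have "\<rho> k l = (\<Prod>X\<in>\<alpha>. Ra X (restr k X) (restr l X))" using hA k l by blast
  also have "\<dots> = (\<Prod>X\<in>\<alpha>. ?m X (restr k X) (restr l X))"
  proof (intro prod.cong refl)
    fix X assume X: "X \<in> \<alpha>"
    have XL: "L \<inter> X = X" using fa(5) X by blast
    show "Ra X (restr k X) (restr l X) = ?m X (restr k X) (restr l X)"
      using s2[OF X] restr_in[OF k, of X] restr_in[OF l, of X] XL by simp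
  qed
  also have "\<dots> = (\<Prod>X\<in>\<alpha>. \<Prod>Y\<in>\<beta>. T (X \<inter> Y))"
  proof (intro prod.cong refl)
    fix X assume X: "X \<in> \<alpha>"
    have XL: "L \<inter> X = X" using fa(5) X by blast
    show "?m X (restr k X) (restr l X) = (\<Prod>Y\<in>\<beta>. T (X \<inter> Y))"
      using s4[OF X] restr_in[OF k, of X] restr_in[OF l, of X] XL by (simp add: T_def restr_restr)
  qed
  also have "\<dots> = (\<Prod>p\<in>\<alpha> \<times> \<beta>. T (fst p \<inter> snd p))"
    by (simp add: prod.cartesian_product split_beta)
  also have "\<dots> = (\<Prod>p\<in>{p \<in> \<alpha> \<times> \<beta>. fst p \<inter> snd p \<noteq> {}}. T (fst p \<inter> snd p))"
  proof (rule prod.mono_neutral_right)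
    show "finite (\<alpha> \<times> \<beta>)" using fa(1) fb(1) by simp
    show "{p \<in> \<alpha> \<times> \<beta>. fst p \<inter> snd p \<noteq> {}} \<subseteq> \<alpha> \<times> \<beta>" by blast
    show "\<forall>i\<in>\<alpha> \<times> \<beta> - {p \<in> \<alpha> \<times> \<beta>. fst p \<inter> snd p \<noteq> {}}. T (fst i \<inter> snd i) = 1"
      using T0 by auto
  qed
  also have "\<dots> = (\<Prod>Z\<in>meet \<alpha> \<beta>. T Z)"
  proof -
    have "inj_on (\<lambda>p. fst p \<inter> snd p) {p \<in> \<alpha> \<times> \<beta>. fst p \<inter> snd p \<noteq> {}}"
    proof (rule inj_onI)
      fix p q assume p: "p \<in> {p \<in> \<alpha> \<times> \<beta>. fst p \<inter> snd p \<noteq> {}}" and q: "q \<in> {p \<in> \<alpha> \<times> \<beta>. fst p \<inter> snd p \<noteq> {}}"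
        and e: "fst p \<inter> snd p = fst q \<inter> snd q"
      from p obtain i where i: "i \<in> fst p \<inter> snd p" by blast
      then have "i \<in> fst q \<inter> snd q" using e by simp
      then have i2: "i \<in> fst q" "i \<in> snd q" by auto
      have "fst p = fst q"
      proof (rule ccontr)
        assume "fst p \<noteq> fst q"
        moreover have "fst p \<in> \<alpha>" "fst q \<in> \<alpha>" using p q by auto
        ultimately have "fst p \<inter> fst q = {}" using fa(3) by blast
        then show False using i i2 by blast
      qed
      moreover have "snd p = snd q"
      proof (rule ccontr)
        assume "snd p \<noteq> snd q"
        moreover have "snd p \<in> \<beta>" "snd q \<in> \<beta>" using p q by auto
        ultimately have "snd p \<inter> snd q = {}" using fb(3) by blast
        then show False using i i2 by blast
      qed
      ultimately have "fst p = fst q" "snd p = snd q" by auto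
      then show "p = q" by (simp add: prod_eq_iff)
    qed
    then show ?thesis unfolding meet_def by (simp add: prod.reindex)
  qed
  finally show ?thesis by (simp add: T_def)
qed

lemma meet_part:
  assumes pa: "is_partition L \<alpha>" and pb: "is_partition L \<beta>"
  shows "is_partition L (meet \<alpha> \<beta>)" "refines (meet \<alpha> \<beta>) \<alpha>" "refines (meet \<alpha> \<beta>) \<beta>"
proof -
  have d1: "\<forall>X\<in>\<alpha>. \<forall>Y\<in>\<alpha>. X \<noteq> Y \<longrightarrow> X \<inter> Y = {}" "\<Union>\<alpha> = L" using pa by (auto simp: is_partition_def)
  have d2: "\<forall>X\<in>\<beta>. \<forall>Y\<in>\<beta>. X \<noteq> Y \<longrightarrow> X \<inter> Y = {}" "\<Union>\<beta> = L" using pb by (auto simp: is_partition_def)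
  have disj: "Z1 \<inter> Z2 = {}" if z1: "Z1 \<in> meet \<alpha> \<beta>" and z2: "Z2 \<in> meet \<alpha> \<beta>" and z3: "Z1 \<noteq> Z2" for Z1 Z2
  proof -
    obtain p1 where p1: "p1 \<in> \<alpha> \<times> \<beta>" "Z1 = fst p1 \<inter> snd p1" using z1 unfolding meet_def by blast
    define X1 Y1 where "X1 = fst p1" and "Y1 = snd p1"
    have 1: "X1 \<in> \<alpha>" "Y1 \<in> \<beta>" "Z1 = X1 \<inter> Y1" using p1 unfolding X1_def Y1_def by auto
    obtain p2 where p2: "p2 \<in> \<alpha> \<times> \<beta>" "Z2 = fst p2 \<inter> snd p2" using z2 unfolding meet_def by blast
    define X2 Y2 where "X2 = fst p2" and "Y2 = snd p2"
    have 2: "X2 \<in> \<alpha>" "Y2 \<in> \<beta>" "Z2 = X2 \<inter> Y2" using p2 unfolding X2_def Y2_def by auto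
    have "X1 \<noteq> X2 \<or> Y1 \<noteq> Y2" using 1 2 z3 by blast
    then show ?thesis
    proof
      assume "X1 \<noteq> X2" then have "X1 \<inter> X2 = {}" using d1(1) 1 2 by blast
      then show ?thesis using 1 2 by blast
    next
      assume "Y1 \<noteq> Y2" then have "Y1 \<inter> Y2 = {}" using d2(1) 1 2 by blast
      then show ?thesis using 1 2 by blast
    qed
  qed
  have un: "\<Union>(meet \<alpha> \<beta>) = L"
  proof
    show "\<Union>(meet \<alpha> \<beta>) \<subseteq> L" using d1(2) unfolding meet_def by auto
    show "L \<subseteq> \<Union>(meet \<alpha> \<beta>)"
    proof
      fix i assume "i \<in> L"
      then obtain X Y where "X \<in> \<alpha>" "Y \<in> \<beta>" "i \<in> X" "i \<in> Y" using d1(2) d2(2) by blast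
      then have "X \<inter> Y \<in> meet \<alpha> \<beta>" "i \<in> X \<inter> Y" unfolding meet_def by (auto intro!: image_eqI[where x="(X,Y)"])
      then show "i \<in> \<Union>(meet \<alpha> \<beta>)" by blast
    qed
  qed
  have ne: "\<forall>Z\<in>meet \<alpha> \<beta>. Z \<noteq> {}" unfolding meet_def by auto
  show "is_partition L (meet \<alpha> \<beta>)" unfolding is_partition_def using disj un ne by blast
  show "refines (meet \<alpha> \<beta>) \<alpha>" "refines (meet \<alpha> \<beta>) \<beta>" unfolding refines_def meet_def by auto
qed

lemma unc_prod:
  assumes "\<rho> \<in> unc n d \<xi>"
  obtains R where "\<forall>X\<in>\<xi>. R X \<in> dens d X"
    "\<forall>f g. f \<in> basis_idx d {1..n} \<and> g \<in> basis_idx d {1..n} \<longrightarrow> \<rho> f g = (\<Prod>X\<in>\<xi>. R X (restr f X) (restr g X))"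
    "\<rho> \<in> dens d {1..n}"
proof -
  have rd: "\<rho> \<in> dens d {1..n}" using assms by (simp add: unc_def)
  from assms obtain R where R: "\<forall>X\<in>\<xi>. R X \<in> dens d X"
    "\<rho> = (\<lambda>f g. if f \<in> basis_idx d {1..n} \<and> g \<in> basis_idx d {1..n}
                 then (\<Prod>X\<in>\<xi>. R X (restr f X) (restr g X)) else 0)"
    unfolding unc_def mem_Collect_eq by (elim conjE exE) (rule that)
  have "\<forall>f g. f \<in> basis_idx d {1..n} \<and> g \<in> basis_idx d {1..n} \<longrightarrow> \<rho> f g = (\<Prod>X\<in>\<xi>. R X (restr f X) (restr g X))"
    by (subst R(2)) simp
  then show ?thesis using that R(1) rd by blast
qed

lemma unc_meet:
  assumes pa: "\<alpha> \<in> PI n" and pb: "\<beta> \<in> PI n" and ra: "\<rho> \<in> unc n d \<alpha>" and rb: "\<rho> \<in> unc n d \<beta>"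
  shows "\<rho> \<in> unc n d (meet \<alpha> \<beta>)"
proof -
  let ?L = "{1..n}"
  have pa': "is_partition ?L \<alpha>" and pb': "is_partition ?L \<beta>" using pa pb by (auto simp: PI_def)
  obtain Ra where Ra: "\<forall>X\<in>\<alpha>. Ra X \<in> dens d X"
    "\<forall>f g. f \<in> basis_idx d ?L \<and> g \<in> basis_idx d ?L \<longrightarrow> \<rho> f g = (\<Prod>X\<in>\<alpha>. Ra X (restr f X) (restr g X))"
    and rd: "\<rho> \<in> dens d ?L" by (rule unc_prod[OF ra])
  obtain Rb where Rb: "\<forall>X\<in>\<beta>. Rb X \<in> dens d X"
    "\<forall>f g. f \<in> basis_idx d ?L \<and> g \<in> basis_idx d ?L \<longrightarrow> \<rho> f g = (\<Prod>X\<in>\<beta>. Rb X (restr f X) (restr g X))"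
    by (rule unc_prod[OF rb])
  have mp: "is_partition ?L (meet \<alpha> \<beta>)" using meet_part[OF pa' pb'] by simp
  have md: "\<forall>Z\<in>meet \<alpha> \<beta>. marg d ?L \<rho> Z \<in> dens d Z"
  proof
    fix Z assume "Z \<in> meet \<alpha> \<beta>"
    then have "Z \<subseteq> ?L" using part_facts(5)[OF _ mp] by blast
    then show "marg d ?L \<rho> Z \<in> dens d Z" using marg_dens[OF _ _ rd] by blast
  qed
  have eq: "\<rho> = (\<lambda>f g. if f \<in> basis_idx d ?L \<and> g \<in> basis_idx d ?L
                 then (\<Prod>Z\<in>meet \<alpha> \<beta>. marg d ?L \<rho> Z (restr f Z) (restr g Z)) else 0)"
  proof (intro ext)
    fix f g
    show "\<rho> f g = (if f \<in> basis_idx d ?L \<and> g \<in> basis_idx d ?L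
                 then (\<Prod>Z\<in>meet \<alpha> \<beta>. marg d ?L \<rho> Z (restr f Z) (restr g Z)) else 0)"
    proof (cases "f \<in> basis_idx d ?L \<and> g \<in> basis_idx d ?L")
      case True
      have "\<rho> f g = (\<Prod>Z\<in>meet \<alpha> \<beta>. marg d ?L \<rho> Z (restr f Z) (restr g Z))"
        using True by (intro meet_factor[OF _ pa' pb' Ra(1) Rb(1) Ra(2) Rb(2) rd]) auto
      then show ?thesis using True by simp
    next
      case False
      then show ?thesis using rd by (auto simp: dens_def)
    qed
  qed
  show ?thesis unfolding unc_def mem_Collect_eq
    by (rule conjI[OF rd], rule exI[where x="marg d ?L \<rho>"], rule conjI[OF md eq])
qed

definition one :: "nat set \<Rightarrow> nat \<Rightarrow> nat" where "one S = (\<lambda>i. if i \<in> S then 1 else 0)"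
definition cc :: complex where "cc = complex_of_real (sqrt (1/2))"
definition psi :: "(nat \<Rightarrow> nat) \<Rightarrow> nat set \<Rightarrow> (nat \<Rightarrow> nat) \<Rightarrow> complex" where
  "psi d X f = (if f \<in> basis_idx d X \<and> (f = one X \<or> f = one {}) then cc else 0)"
definition gst :: "(nat \<Rightarrow> nat) \<Rightarrow> nat set \<Rightarrow> op" where
  "gst d X = (\<lambda>f g. cnj (psi d X f) * psi d X g)"
definition rhopi :: "nat \<Rightarrow> (nat \<Rightarrow> nat) \<Rightarrow> nat set set \<Rightarrow> op" where
  "rhopi n d \<pi> = (\<lambda>f g. if f \<in> basis_idx d {1..n} \<and> g \<in> basis_idx d {1..n}
      then (\<Prod>X\<in>\<pi>. gst d X (restr f X) (restr g X)) else 0)"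

lemma rank1_pos: "(0::complex) \<le> (\<Sum>f\<in>A. \<Sum>g\<in>A. cnj (v f) * (cnj (u f) * u g) * v g)"
proof -
  define S where "S = (\<Sum>g\<in>A. u g * v g)"
  have "cnj S * S = (\<Sum>f\<in>A. cnj (u f * v f)) * (\<Sum>g\<in>A. u g * v g)" by (simp add: S_def cnj_sum)
  also have "\<dots> = (\<Sum>f\<in>A. \<Sum>g\<in>A. cnj (u f * v f) * (u g * v g))" by (rule sum_product)
  finally have "(\<Sum>f\<in>A. \<Sum>g\<in>A. cnj (v f) * (cnj (u f) * u g) * v g) = cnj S * S"
    by (simp add: mult_ac)
  also have "\<dots> = complex_of_real ((cmod S)^2)"
    by (metis complex_norm_square mult.commute)
  also have "0 \<le> \<dots>" by (simp add: less_eq_complex_def)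
  finally show ?thesis .
qed

lemma one_in: assumes "\<forall>i\<in>X. 1 < d i" shows "one X \<in> basis_idx d X"
  unfolding basis_idx_def
proof (intro CollectI conjI allI ballI impI)
  fix i assume "i \<in> X" then show "one X i < d i" using assms by (simp add: one_def)
next
  fix i assume "i \<notin> X" then show "one X i = 0" by (simp add: one_def)
qed

lemma one_empty_in: assumes "\<forall>i\<in>X. 1 < d i" shows "one {} \<in> basis_idx d X"
  using assms by (auto simp: one_def basis_idx_def)

lemma one_inj: "one S = one T \<Longrightarrow> S = T"
  by (auto simp: one_def fun_eq_iff split: if_splits)

lemma restr_one: "restr (one S) Y = one (S \<inter> Y)"
  by (auto simp: one_def restr_def fun_eq_iff)

lemma cc_sq: "cnj cc * cc = 1/2"
proof -
  have "cnj cc * cc = complex_of_real (sqrt (1/2) * sqrt (1/2))"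
    unfolding cc_def by (simp only: complex_cnj_complex_of_real of_real_mult)
  also have "sqrt (1/2) * sqrt (1/2) = (1/2::real)" by simp
  finally show ?thesis by simp
qed

lemma gst_dens:
  assumes "X \<noteq> {}" "finite X" "\<forall>i\<in>X. 1 < d i"
  shows "gst d X \<in> dens d X"
proof -
  have ne: "one X \<noteq> one {}" using one_inj assms(1) by blast
  have "(\<Sum>f\<in>basis_idx d X. gst d X f f) = (\<Sum>f\<in>basis_idx d X. if f \<in> {one X, one {}} then 1/2 else 0)"
    by (intro sum.cong refl) (auto simp: gst_def psi_def cc_sq)
  also have "\<dots> = (\<Sum>f\<in>basis_idx d X \<inter> {one X, one {}}. 1/2)"
    by (rule sum.inter_restrict[OF finite_basis[OF assms(2)], symmetric])
  also have "basis_idx d X \<inter> {one X, one {}} = {one X, one {}}"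
    using one_in[OF assms(3)] one_empty_in[OF assms(3)] by blast
  finally have tr: "(\<Sum>f\<in>basis_idx d X. gst d X f f) = 1" using ne by simp
  show ?thesis unfolding dens_def using tr rank1_pos
    by (auto simp: gst_def psi_def)
qed

lemma rhopi_unc:
  assumes pa: "\<pi> \<in> PI n" and dd: "\<forall>i\<in>{1..n}. 1 < d i"
  shows "rhopi n d \<pi> \<in> unc n d \<pi>"
proof -
  let ?L = "{1..n}"
  have pa': "is_partition ?L \<pi>" using pa by (simp add: PI_def)
  note pf = part_facts[OF finite_atLeastAtMost pa']
  have gd: "\<forall>X\<in>\<pi>. gst d X \<in> dens d X"
  proof
    fix X assume X: "X \<in> \<pi>"
    have XL: "X \<subseteq> ?L" using X pf(5) by blast
    have d1: "\<forall>i\<in>X. 1 < d i" using XL dd by blast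
    have ne: "X \<noteq> {}" using X pf(6) by blast
    have fX: "finite X" using X pf(2) by blast
    show "gst d X \<in> dens d X" by (rule gst_dens[OF ne fX d1])
  qed
  define Psi where "Psi f = (\<Prod>X\<in>\<pi>. psi d X (restr f X))" for f
  have fac: "rhopi n d \<pi> f g = cnj (Psi f) * Psi g" if "f \<in> basis_idx d ?L" "g \<in> basis_idx d ?L" for f g
  proof -
    have "rhopi n d \<pi> f g = (\<Prod>X\<in>\<pi>. cnj (psi d X (restr f X)) * psi d X (restr g X))"
      using that by (simp add: rhopi_def gst_def)
    also have "\<dots> = (\<Prod>X\<in>\<pi>. cnj (psi d X (restr f X))) * (\<Prod>X\<in>\<pi>. psi d X (restr g X))"
      by (rule prod.distrib)
    also have "\<dots> = cnj (Psi f) * Psi g" by (simp add: Psi_def cnj_prod)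
    finally show ?thesis .
  qed
  have tr: "(\<Sum>k\<in>basis_idx d ?L. rhopi n d \<pi> k k) = 1"
  proof -
    have "(\<Sum>k\<in>basis_idx d ?L. rhopi n d \<pi> k k)
        = (\<Sum>k\<in>basis_idx d (\<Union>X\<in>\<pi>. X). \<Prod>X\<in>\<pi>. (\<lambda>X h. gst d X h h) X (restr k X))"
    proof -
      have U: "(\<Union>X\<in>\<pi>. X) = ?L" using pf(4) by simp
      show ?thesis unfolding U by (intro sum.cong refl) (simp add: rhopi_def)
    qed
    also have "\<dots> = (\<Prod>X\<in>\<pi>. \<Sum>f\<in>basis_idx d X. (\<lambda>X h. gst d X h h) X f)"
      by (rule prod_sum[where Bk="\<lambda>X. X" and I=\<pi>]) (use pf in auto)
    also have "\<dots> = 1" using gd by (intro prod.neutral) (simp add: dens_def)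
    finally show ?thesis .
  qed
  have pos: "0 \<le> (\<Sum>f\<in>basis_idx d ?L. \<Sum>g\<in>basis_idx d ?L. cnj (v f) * rhopi n d \<pi> f g * v g)" for v
  proof -
    have "(\<Sum>f\<in>basis_idx d ?L. \<Sum>g\<in>basis_idx d ?L. cnj (v f) * rhopi n d \<pi> f g * v g)
       = (\<Sum>f\<in>basis_idx d ?L. \<Sum>g\<in>basis_idx d ?L. cnj (v f) * (cnj (Psi f) * Psi g) * v g)"
      by (intro sum.cong refl) (simp add: fac)
    then show ?thesis using rank1_pos[where A="basis_idx d ?L" and v=v and u=Psi] by simp
  qed
  have rd: "rhopi n d \<pi> \<in> dens d ?L"
    unfolding dens_def mem_Collect_eq
  proof (intro conjI)
    show "\<forall>f g. (f \<notin> basis_idx d ?L \<or> g \<notin> basis_idx d ?L) \<longrightarrow> rhopi n d \<pi> f g = 0"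
      by (auto simp: rhopi_def)
  qed (use pos tr in blast)+
  show ?thesis unfolding unc_def mem_Collect_eq
    by (rule conjI[OF rd], rule exI[where x="gst d"], rule conjI[OF gd]) (unfold rhopi_def, rule refl)
qed

lemma one_in_sub: assumes "S \<subseteq> A" "\<forall>i\<in>A. 1 < d i" shows "one S \<in> basis_idx d A"
  unfolding basis_idx_def
proof (intro CollectI conjI allI ballI impI)
  fix i assume "i \<in> A" then show "one S i < d i" using assms by (cases "i \<in> S") (auto simp: one_def)
next
  fix i assume "i \<notin> A" then show "one S i = 0" using assms(1) by (auto simp: one_def)
qed

lemma rhopi_exact:
  assumes pa: "\<pi> \<in> PI n" and pu: "\<upsilon> \<in> PI n" and dd: "\<forall>i\<in>{1..n}. 1 < d i"
    and ru: "rhopi n d \<pi> \<in> unc n d \<upsilon>"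
  shows "refines \<pi> \<upsilon>"
proof (rule ccontr)
  let ?L = "{1..n}"
  assume "\<not> refines \<pi> \<upsilon>"
  then obtain X where X: "X \<in> \<pi>" "\<forall>Y\<in>\<upsilon>. \<not> X \<subseteq> Y" by (auto simp: refines_def)
  have pa': "is_partition ?L \<pi>" using pa by (simp add: PI_def)
  have pu': "is_partition ?L \<upsilon>" using pu by (simp add: PI_def)
  note pf = part_facts[OF finite_atLeastAtMost pa'] and uf = part_facts[OF finite_atLeastAtMost pu']
  have XL: "X \<subseteq> ?L" using X(1) pf(5) by blast
  obtain i where i: "i \<in> X" using X(1) pf(6) by blast
  then have "i \<in> \<Union>\<upsilon>" using XL uf(4) by blast
  then obtain Y0 where Y0: "Y0 \<in> \<upsilon>" "i \<in> Y0" by blast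
  obtain j where j: "j \<in> X" "j \<notin> Y0" using X(2) Y0(1) by blast
  obtain \<sigma> where \<sigma>: "\<forall>Y\<in>\<upsilon>. \<sigma> Y \<in> dens d Y"
    "\<forall>f g. f \<in> basis_idx d ?L \<and> g \<in> basis_idx d ?L \<longrightarrow> rhopi n d \<pi> f g = (\<Prod>Y\<in>\<upsilon>. \<sigma> Y (restr f Y) (restr g Y))"
    by (rule unc_prod[OF ru])
  define D where "D k = rhopi n d \<pi> k k" for k
  define E where "E Y S = \<sigma> Y (one S) (one S)" for Y S
  have Dsig: "D (one S) = (\<Prod>Y\<in>\<upsilon>. E Y (S \<inter> Y))" if "S \<subseteq> ?L" for S
    using \<sigma>(2) one_in_sub[OF that dd] by (simp add: D_def E_def restr_one)
  have key: "D (one {}) * D (one X) = D (one (X - Y0)) * D (one (X \<inter> Y0))"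
  proof -
    have "D (one {}) * D (one X) = (\<Prod>Y\<in>\<upsilon>. E Y ({} \<inter> Y) * E Y (X \<inter> Y))"
      using Dsig[of "{}"] Dsig[OF XL] by (simp add: prod.distrib)
    also have "\<dots> = (\<Prod>Y\<in>\<upsilon>. E Y ((X - Y0) \<inter> Y) * E Y ((X \<inter> Y0) \<inter> Y))"
    proof (rule prod.cong[OF refl])
      fix Y assume Y: "Y \<in> \<upsilon>"
      show "E Y ({} \<inter> Y) * E Y (X \<inter> Y) = E Y ((X - Y0) \<inter> Y) * E Y ((X \<inter> Y0) \<inter> Y)"
      proof (cases "Y = Y0")
        case True
        have "(X - Y0) \<inter> Y = {}" "(X \<inter> Y0) \<inter> Y = X \<inter> Y" using True by auto
        then show ?thesis by simp
      next
        case False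
        then have "Y \<inter> Y0 = {}" using uf(3) Y Y0(1) by blast
        then have "(X - Y0) \<inter> Y = X \<inter> Y" "(X \<inter> Y0) \<inter> Y = {}" by auto
        then show ?thesis by (simp add: mult.commute)
      qed
    qed
    also have "\<dots> = D (one (X - Y0)) * D (one (X \<inter> Y0))"
    proof -
      have "X - Y0 \<subseteq> ?L" "X \<inter> Y0 \<subseteq> ?L" using XL by auto
      then show ?thesis using Dsig[of "X - Y0"] Dsig[of "X \<inter> Y0"] by (simp add: prod.distrib)
    qed
    finally show ?thesis .
  qed
  have ccnz: "cnj cc * cc \<noteq> 0"
  proof
    assume "cnj cc * cc = 0" then show False using cc_sq by simp
  qed
  have Dpi: "D k = (\<Prod>X'\<in>\<pi>. cnj (psi d X' (restr k X')) * psi d X' (restr k X'))" if "k \<in> basis_idx d ?L" for k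
    using that by (simp add: D_def rhopi_def gst_def)
  have dX: "\<forall>i\<in>X'. 1 < d i" if "X' \<in> \<pi>" for X'
    using that pf(5) dd by blast
  have nz: "D k \<noteq> 0" if k: "k \<in> basis_idx d ?L" and kk: "\<forall>X'\<in>\<pi>. restr k X' = one X' \<or> restr k X' = one {}" for k
  proof -
    have "\<forall>X'\<in>\<pi>. cnj (psi d X' (restr k X')) * psi d X' (restr k X') \<noteq> 0"
    proof
      fix X' assume X': "X' \<in> \<pi>"
      have "restr k X' \<in> basis_idx d X'"
        using kk X' one_in[OF dX[OF X']] one_empty_in[OF dX[OF X']] by auto
      then have "psi d X' (restr k X') = cc" using kk X' by (simp add: psi_def)
      then show "cnj (psi d X' (restr k X')) * psi d X' (restr k X') \<noteq> 0" using ccnz by simp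
    qed
    then show ?thesis using Dpi[OF k] pf(1) by simp
  qed
  have D1: "D (one {}) \<noteq> 0"
  proof (rule nz)
    show "one {} \<in> basis_idx d ?L" by (rule one_in_sub[OF _ dd]) simp
  qed (simp add: restr_one)
  have D2: "D (one X) \<noteq> 0"
  proof (rule nz)
    show "one X \<in> basis_idx d ?L" by (rule one_in_sub[OF XL dd])
    show "\<forall>X'\<in>\<pi>. restr (one X) X' = one X' \<or> restr (one X) X' = one {}"
    proof
      fix X' assume X': "X' \<in> \<pi>"
      show "restr (one X) X' = one X' \<or> restr (one X) X' = one {}"
      proof (cases "X' = X")
        case True then show ?thesis by (simp add: restr_one)
      next
        case False then have "X \<inter> X' = {}" using pf(3) X' X(1) by blast
        then show ?thesis by (simp add: restr_one)
      qed
    qed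
  qed
  have D3: "D (one (X - Y0)) = 0"
  proof -
    have r: "restr (one (X - Y0)) X = one (X - Y0)" by (simp add: restr_one Int_absorb2 Diff_subset)
    have n1: "one (X - Y0) \<noteq> one X" using one_inj i Y0(2) by blast
    have n2: "one (X - Y0) \<noteq> one {}" using one_inj j by blast
    have "psi d X (restr (one (X - Y0)) X) = 0" using r n1 n2 by (simp add: psi_def)
    then have "\<exists>X'\<in>\<pi>. cnj (psi d X' (restr (one (X - Y0)) X')) * psi d X' (restr (one (X - Y0)) X') = 0"
      using X(1) by auto
    moreover have "X - Y0 \<subseteq> ?L" using XL by auto
    ultimately show ?thesis using Dpi[OF one_in_sub[of "X - Y0", OF _ dd]] pf(1) by simp
  qed
  show False using key D1 D2 D3 by simp
qed

lemma PII_down: "\<xi> \<in> PII n \<Longrightarrow> \<pi> \<in> \<xi> \<Longrightarrow> \<upsilon> \<in> PI n \<Longrightarrow> refines \<upsilon> \<pi> \<Longrightarrow> \<upsilon> \<in> \<xi>"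
  unfolding PII_def by blast

lemma PII_sub: "\<xi> \<in> PII n \<Longrightarrow> \<xi> \<subseteq> PI n"
  unfolding PII_def by blast

lemma common:
  assumes "finite S" "S \<noteq> {}" "\<forall>\<xi>\<in>S. \<xi> \<in> PII n \<and> \<rho> \<in> unc_set n d \<xi>"
  shows "\<exists>\<pi>\<in>PI n. \<rho> \<in> unc n d \<pi> \<and> (\<forall>\<xi>\<in>S. \<pi> \<in> \<xi>)"
  using assms
proof (induction S rule: finite_ne_induct)
  case (singleton \<xi>)
  then obtain \<pi> where "\<pi> \<in> \<xi>" "\<rho> \<in> unc n d \<pi>" by (auto simp: unc_set_def)
  moreover have "\<pi> \<in> PI n" using PII_sub singleton \<open>\<pi> \<in> \<xi>\<close> by blast
  ultimately show ?case by blast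
next
  case (insert \<xi> F)
  then obtain \<pi> where \<pi>: "\<pi> \<in> PI n" "\<rho> \<in> unc n d \<pi>" "\<forall>\<zeta>\<in>F. \<pi> \<in> \<zeta>" by auto
  have xi: "\<xi> \<in> PII n" "\<rho> \<in> unc_set n d \<xi>" using insert.prems by auto
  then obtain \<pi>' where \<pi>': "\<pi>' \<in> \<xi>" "\<rho> \<in> unc n d \<pi>'" by (auto simp: unc_set_def)
  have \<pi>'P: "\<pi>' \<in> PI n" using PII_sub xi(1) \<pi>'(1) by blast
  let ?m = "meet \<pi> \<pi>'"
  have p1: "is_partition {1..n} \<pi>" "is_partition {1..n} \<pi>'" using \<pi>(1) \<pi>'P by (auto simp: PI_def)
  have mP: "?m \<in> PI n" using meet_part(1)[OF p1] by (simp add: PI_def)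
  have mu: "\<rho> \<in> unc n d ?m" by (rule unc_meet[OF \<pi>(1) \<pi>'P \<pi>(2) \<pi>'(2)])
  have r1: "refines ?m \<pi>" "refines ?m \<pi>'" using meet_part(2,3)[OF p1] by auto
  have "\<forall>\<zeta>\<in>insert \<xi> F. ?m \<in> \<zeta>"
  proof
    fix \<zeta> assume z: "\<zeta> \<in> insert \<xi> F"
    show "?m \<in> \<zeta>"
    proof (cases "\<zeta> = \<xi>")
      case True then show ?thesis using PII_down[OF xi(1) \<pi>'(1) mP r1(2)] by simp
    next
      case False then have "\<zeta> \<in> F" using z by simp
      moreover have "\<zeta> \<in> PII n" using insert.prems z by auto
      ultimately show ?thesis using PII_down[OF _ _ mP r1(1)] \<pi>(3) by blast
    qed
  qed
  then show ?case using mP mu by blast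
qed

theorem proposition1:
  fixes n :: nat and d :: "nat \<Rightarrow> nat"
    and Pstar :: "nat set set set set" and \<Xi> :: "nat set set set set"
  assumes "n \<ge> 1"
    and "\<forall>i\<in>{1..n}. 1 < d i"
    and "Pstar \<subseteq> PII n" and "Pstar \<noteq> {}"
    and "\<Xi> \<in> PIII Pstar"
  shows "C_unc n d Pstar \<Xi> \<noteq> {} \<longleftrightarrow> \<not> (\<Inter>\<Xi> \<subseteq> \<Union>(Pstar - \<Xi>))"
proof
  have XiP: "\<Xi> \<subseteq> Pstar" "\<Xi> \<noteq> {}" using assms(5) unfolding PIII_def by blast+
  assume "C_unc n d Pstar \<Xi> \<noteq> {}"
  then obtain \<rho> where r: "\<rho> \<in> C_unc n d Pstar \<Xi>" by blast
  have r1: "\<forall>\<xi>\<in>\<Xi>. \<rho> \<in> unc_set n d \<xi>"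
  proof
    fix \<xi> assume x: "\<xi> \<in> \<Xi>"
    have "\<rho> \<in> (\<Inter>\<xi>\<in>\<Xi>. unc_set n d \<xi>)" using r unfolding C_unc_def by blast
    then show "\<rho> \<in> unc_set n d \<xi>" using x by blast
  qed
  have r2: "\<forall>\<xi>'\<in>Pstar - \<Xi>. \<rho> \<notin> unc_set n d \<xi>'"
  proof
    fix \<xi>' assume x: "\<xi>' \<in> Pstar - \<Xi>"
    have "\<rho> \<in> (\<Inter>\<xi>'\<in>Pstar - \<Xi>. dens d {1..n} - unc_set n d \<xi>')" using r unfolding C_unc_def by blast
    then have "\<rho> \<in> dens d {1..n} - unc_set n d \<xi>'" using x by blast
    then show "\<rho> \<notin> unc_set n d \<xi>'" by blast
  qed
  have finPI: "finite (PI n)"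
  proof -
    have "PI n \<subseteq> Pow (Pow {1..n})" unfolding PI_def is_partition_def by blast
    then show ?thesis by (rule finite_subset) simp
  qed
  have sub: "PII n \<subseteq> Pow (PI n)" unfolding PII_def by blast
  have fPII: "finite (PII n)" by (rule finite_subset[OF sub]) (simp add: finPI)
  have "\<Xi> \<subseteq> PII n" using XiP(1) assms(3) by (rule order.trans)
  then have finXi: "finite \<Xi>" using fPII by (rule finite_subset)
  obtain \<pi> where \<pi>: "\<pi> \<in> PI n" "\<rho> \<in> unc n d \<pi>" "\<forall>\<xi>\<in>\<Xi>. \<pi> \<in> \<xi>"
  proof -
    have "\<forall>\<xi>\<in>\<Xi>. \<xi> \<in> PII n \<and> \<rho> \<in> unc_set n d \<xi>" using r1 XiP(1) assms(3) by blast
    from common[OF finXi XiP(2) this] show ?thesis using that by blast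
  qed
  show "\<not> (\<Inter>\<Xi> \<subseteq> \<Union>(Pstar - \<Xi>))"
  proof
    assume "\<Inter>\<Xi> \<subseteq> \<Union>(Pstar - \<Xi>)"
    moreover have "\<pi> \<in> \<Inter>\<Xi>" using \<pi>(3) by blast
    ultimately obtain \<xi>' where "\<xi>' \<in> Pstar - \<Xi>" "\<pi> \<in> \<xi>'" by blast
    moreover have "\<rho> \<in> unc_set n d \<xi>'" unfolding unc_set_def using \<open>\<pi> \<in> \<xi>'\<close> \<pi>(2) by blast
    ultimately show False using r2 by blast
  qed
next
  have XiP: "\<Xi> \<subseteq> Pstar" "\<Xi> \<noteq> {}" using assms(5) unfolding PIII_def by blast+
  assume "\<not> (\<Inter>\<Xi> \<subseteq> \<Union>(Pstar - \<Xi>))"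
  then obtain \<pi> where \<pi>: "\<pi> \<in> \<Inter>\<Xi>" "\<pi> \<notin> \<Union>(Pstar - \<Xi>)" by blast
  obtain \<xi>0 where "\<xi>0 \<in> \<Xi>" using XiP(2) by blast
  then have "\<pi> \<in> \<xi>0" "\<xi>0 \<in> PII n" using \<pi>(1) XiP(1) assms(3) by blast+
  then have piP: "\<pi> \<in> PI n" using PII_sub by blast
  let ?r = "rhopi n d \<pi>"
  have ru: "?r \<in> unc n d \<pi>" by (rule rhopi_unc[OF piP assms(2)])
  have rd: "?r \<in> dens d {1..n}" using ru by (simp add: unc_def)
  have "?r \<in> C_unc n d Pstar \<Xi>"
    unfolding C_unc_def
  proof (rule IntI)
    show "?r \<in> (\<Inter>\<xi>'\<in>Pstar - \<Xi>. dens d {1..n} - unc_set n d \<xi>')"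
    proof (rule INT_I)
      fix \<xi>' assume x': "\<xi>' \<in> Pstar - \<Xi>"
      have x'P: "\<xi>' \<in> PII n" using x' assms(3) by blast
      have "?r \<notin> unc_set n d \<xi>'"
      proof
        assume "?r \<in> unc_set n d \<xi>'"
        then obtain \<upsilon> where u: "\<upsilon> \<in> \<xi>'" "?r \<in> unc n d \<upsilon>" unfolding unc_set_def by blast
        have uP: "\<upsilon> \<in> PI n" using PII_sub[OF x'P] u(1) by blast
        have "refines \<pi> \<upsilon>" by (rule rhopi_exact[OF piP uP assms(2) u(2)])
        then have "\<pi> \<in> \<xi>'" using PII_down[OF x'P u(1) piP] by blast
        then show False using \<pi>(2) x' by blast
      qed
      then show "?r \<in> dens d {1..n} - unc_set n d \<xi>'" using rd by blast
    qed
    show "?r \<in> (\<Inter>\<xi>\<in>\<Xi>. unc_set n d \<xi>)"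
      using \<pi>(1) ru unfolding unc_set_def by blast
  qed
  then show "C_unc n d Pstar \<Xi> \<noteq> {}" by blast
qed

end
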